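(* Let $T=\left(\begin{smallmatrix}\mathbb{C}&\mathbb{C}\\0&\mathbb{C}\end{smallmatrix}\right)$ be the algebra of upper triangular complex $2\times2$ matrices (with norm $\|\left(\begin{smallmatrix}a&b\\0&c\end{smallmatrix}\right)\|=|a|+|b|+|c|$), and let $\phi\in\Delta(T)$ be given by $\phi\left(\begin{smallmatrix}a&b\\0&c\end{smallmatrix}\right)=c$. Then $T$ is not approximately left $\phi$-biprojective.
   Context: $\Delta(A)$ is the set of characters of a Banach algebra $A$; $A\otimes_pA$ is the projective tensor product with $a\cdot(b\otimes c)=ab\otimes c$, $(b\otimes c)\cdot a=b\otimes ca$, $\pi_A(a\otimes b)=ab$. For $\phi\in\Delta(A)$, $A$ is approximately left $\phi$-biprojective if there is a net $(\rho_\alpha)$ of bounded linear maps $A\to A\otimes_pA$ such that for all $a,x\in A$: $\|a\cdot\rho_\alpha(x)-\rho_\alpha(ax)\|\to0$, $\|\rho_\alpha(xa)-\phi(a)\rho_\alpha(x)\|\to0$, and $\phi(\pi_A(\rho_\alpha(x)))-\phi(x)\to0$. *)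

theory Defs
  imports Complex_Main "HOL-Library.Numeral_Type"
begin

text \<open>The algebra T of upper triangular complex 2x2 matrices. The triple (a,b,c)
represents the matrix with rows (a, b) and (0, c).\<close>
type_synonym triT = "complex \<times> complex \<times> complex"

fun tadd :: "triT \<Rightarrow> triT \<Rightarrow> triT" where
  "tadd (a,b,c) (a',b',c') = (a + a', b + b', c + c')"

fun tscale :: "complex \<Rightarrow> triT \<Rightarrow> triT" where
  "tscale s (a,b,c) = (s * a, s * b, s * c)"

fun tmult :: "triT \<Rightarrow> triT \<Rightarrow> triT" where
  "tmult (a,b,c) (a',b',c') = (a * a', a * b' + b * c', c * c')"

fun tnorm :: "triT \<Rightarrow> real" where
  "tnorm (a,b,c) = cmod a + cmod b + cmod c"

fun phiT :: "triT \<Rightarrow> complex" where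
  "phiT (a,b,c) = c"

definition tbasis :: "3 \<Rightarrow> triT" where
  "tbasis i = (if i = 0 then (1,0,0) else if i = 1 then (0,1,0) else (0,0,1))"

definition tcoord :: "3 \<Rightarrow> triT \<Rightarrow> complex" where
  "tcoord i x = (if i = 0 then fst x else if i = 1 then fst (snd x) else snd (snd x))"

text \<open>The algebraic tensor product T \<otimes> T, represented by coefficient arrays
with respect to the basis (tbasis i \<otimes> tbasis j).\<close>
type_synonym tensT = "3 \<Rightarrow> 3 \<Rightarrow> complex"

definition tens_of_sum :: "nat \<Rightarrow> (nat \<Rightarrow> triT) \<Rightarrow> (nat \<Rightarrow> triT) \<Rightarrow> tensT" where
  "tens_of_sum n xs ys = (\<lambda>i j. \<Sum>k<n. tcoord i (xs k) * tcoord j (ys k))"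

definition pnorm :: "tensT \<Rightarrow> real" where
  "pnorm u = Inf {(\<Sum>k<n. tnorm (xs k) * tnorm (ys k)) | n xs ys. u = tens_of_sum n xs ys}"

definition tens_diff :: "tensT \<Rightarrow> tensT \<Rightarrow> tensT" where
  "tens_diff u v = (\<lambda>i j. u i j - v i j)"

definition tens_scale :: "complex \<Rightarrow> tensT \<Rightarrow> tensT" where
  "tens_scale s u = (\<lambda>i j. s * u i j)"

text \<open>Left module action a\<cdot>(b\<otimes>c) = ab\<otimes>c, extended linearly.\<close>
definition lact :: "triT \<Rightarrow> tensT \<Rightarrow> tensT" where
  "lact a u = (\<lambda>i j. \<Sum>k\<in>UNIV. u k j * tcoord i (tmult a (tbasis k)))"

text \<open>Right module action (b\<otimes>c)\<cdot>a = b\<otimes>ca, extended linearly.\<close>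
definition ract :: "tensT \<Rightarrow> triT \<Rightarrow> tensT" where
  "ract u a = (\<lambda>i j. \<Sum>l\<in>UNIV. u i l * tcoord j (tmult (tbasis l) a))"

text \<open>The product map pi(b\<otimes>c) = bc, extended linearly.\<close>
definition piT :: "tensT \<Rightarrow> triT" where
  "piT u = (\<Sum>k\<in>UNIV. \<Sum>l\<in>UNIV. u k l * tcoord 0 (tmult (tbasis k) (tbasis l)),
            \<Sum>k\<in>UNIV. \<Sum>l\<in>UNIV. u k l * tcoord 1 (tmult (tbasis k) (tbasis l)),
            \<Sum>k\<in>UNIV. \<Sum>l\<in>UNIV. u k l * tcoord 2 (tmult (tbasis k) (tbasis l)))"

definition bounded_linear_T :: "(triT \<Rightarrow> tensT) \<Rightarrow> bool" where
  "bounded_linear_T \<rho> \<longleftrightarrow>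
     (\<forall>x y. \<rho> (tadd x y) = (\<lambda>i j. \<rho> x i j + \<rho> y i j)) \<and>
     (\<forall>s x. \<rho> (tscale s x) = tens_scale s (\<rho> x)) \<and>
     (\<exists>K. \<forall>x. pnorm (\<rho> x) \<le> K * tnorm x)"

text \<open>Approximate left phi-biprojectivity of T; the net is given by a proper filter F
on an index type 'i (nets over directed sets correspond to proper filters).\<close>
definition approx_left_phi_biproj_net :: "'i filter \<Rightarrow> ('i \<Rightarrow> triT \<Rightarrow> tensT) \<Rightarrow> bool" where
  "approx_left_phi_biproj_net F \<rho> \<longleftrightarrow> F \<noteq> bot \<and>
     (\<forall>\<alpha>. bounded_linear_T (\<rho> \<alpha>)) \<and>
     (\<forall>a x. ((\<lambda>\<alpha>. pnorm (tens_diff (lact a (\<rho> \<alpha> x)) (\<rho> \<alpha> (tmult a x)))) \<longlongrightarrow> 0) F) \<and>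
     (\<forall>a x. ((\<lambda>\<alpha>. pnorm (tens_diff (\<rho> \<alpha> (tmult x a)) (tens_scale (phiT a) (\<rho> \<alpha> x)))) \<longlongrightarrow> 0) F) \<and>
     (\<forall>x. ((\<lambda>\<alpha>. phiT (piT (\<rho> \<alpha> x)) - phiT x) \<longlongrightarrow> 0) F)"

end

theory Submission
  imports Defs
begin

lemma U3: "(UNIV :: 3 set) = {0,1,2}"
proof -
  have "\<And>x::3. x = 0 \<or> x = 1 \<or> x = 2"
  proof -
    fix x :: 3
    show "x = 0 \<or> x = 1 \<or> x = 2"
    proof (induct x)
      case (of_int z)
      then have "z = 0 \<or> z = 1 \<or> z = 2" by auto
      then show ?case by auto
    qed
  qed
  then show ?thesis by auto
qed

lemma coord_le: "cmod (tcoord i x) \<le> tnorm x"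
  by (cases x) (auto simp: tcoord_def)

lemma coef_le: "cmod (u i j) \<le> pnorm u"
proof -
  define S where "S = {(\<Sum>k<n. tnorm (xs k) * tnorm (ys k)) | n xs ys. u = tens_of_sum n xs ys}"
  define xs :: "nat \<Rightarrow> triT" where "xs k = tbasis (of_nat k)" for k
  define ys :: "nat \<Rightarrow> triT" where "ys k = (u (of_nat k) 0, u (of_nat k) 1, u (of_nat k) 2)" for k
  have lt3: "{..<3::nat} = {0,1,2}" by auto
  have "u = tens_of_sum 3 xs ys"
  proof (rule ext, rule ext)
    fix a b :: 3
    have a: "a = 0 \<or> a = 1 \<or> a = 2" and b: "b = 0 \<or> b = 1 \<or> b = 2" using U3 by auto
    show "u a b = tens_of_sum 3 xs ys a b"
      unfolding tens_of_sum_def lt3 using a b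
      by (auto simp: xs_def ys_def tbasis_def tcoord_def)
  qed
  then have ne: "S \<noteq> {}" unfolding S_def by blast
  have "\<forall>s\<in>S. cmod (u i j) \<le> s"
  proof
    fix s assume "s \<in> S"
    then obtain n xs ys where s: "s = (\<Sum>k<n. tnorm (xs k) * tnorm (ys k))"
      and u: "u = tens_of_sum n xs ys" unfolding S_def by blast
    have "cmod (u i j) = cmod (\<Sum>k<n. tcoord i (xs k) * tcoord j (ys k))"
      using u by (simp add: tens_of_sum_def)
    also have "\<dots> \<le> (\<Sum>k<n. cmod (tcoord i (xs k) * tcoord j (ys k)))"
      by (rule norm_sum)
    also have "\<dots> \<le> s" unfolding s
      by (rule sum_mono) (simp add: norm_mult mult_mono[OF coord_le coord_le] order_trans[OF norm_ge_zero coord_le])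
    finally show "cmod (u i j) \<le> s" .
  qed
  then have "cmod (u i j) \<le> Inf S" using ne by (intro cInf_greatest) auto
  then show ?thesis by (simp add: pnorm_def S_def)
qed

lemma ne3: "(0::3) \<noteq> 1" "(0::3) \<noteq> 2" "(1::3) \<noteq> 2" "(1::3) \<noteq> 0" "(2::3) \<noteq> 0" "(2::3) \<noteq> 1"
  by simp_all

lemma sumU3: "(\<Sum>k\<in>(UNIV::3 set). f k) = f 0 + f 1 + f 2"
  unfolding U3 using ne3 by (simp add: add.assoc)

lemma tb: "tbasis 0 = (1,0,0)" "tbasis 1 = (0,1,0)" "tbasis 2 = (0,0,1)"
  unfolding tbasis_def using ne3 by simp_all

lemma tc: "tcoord 0 x = fst x" "tcoord 1 x = fst (snd x)" "tcoord 2 x = snd (snd x)"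
  unfolding tcoord_def using ne3 by simp_all

lemma pi: "phiT (piT v) = v 2 2" for v :: tensT
  unfolding piT_def sumU3 tb tc by simp

lemma la: "lact (0,1,0) v 1 2 = v 2 2" for v :: tensT
  unfolding lact_def sumU3 tb tc by simp

theorem mainTheorem3:
  fixes F :: "'i filter" and \<rho> :: "'i \<Rightarrow> triT \<Rightarrow> tensT"
  shows "\<not> approx_left_phi_biproj_net F \<rho>"
proof
  assume A: "approx_left_phi_biproj_net F \<rho>"
  then have Fnb: "F \<noteq> bot"
    and L: "\<And>a x. ((\<lambda>\<alpha>. pnorm (tens_diff (lact a (\<rho> \<alpha> x)) (\<rho> \<alpha> (tmult a x)))) \<longlongrightarrow> 0) F"
    and R: "\<And>a x. ((\<lambda>\<alpha>. pnorm (tens_diff (\<rho> \<alpha> (tmult x a)) (tens_scale (phiT a) (\<rho> \<alpha> x)))) \<longlongrightarrow> 0) F"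
    and P: "\<And>x. ((\<lambda>\<alpha>. phiT (piT (\<rho> \<alpha> x)) - phiT x) \<longlongrightarrow> 0) F"
    unfolding approx_left_phi_biproj_net_def by blast+
  define u where "u \<alpha> = \<rho> \<alpha> (0,0,1)" for \<alpha>
  have h1: "((\<lambda>\<alpha>. u \<alpha> 2 2 - 1) \<longlongrightarrow> 0) F"
    using P[of "(0,0,1)"] by (simp add: pi u_def)
  then have t1: "((\<lambda>\<alpha>. u \<alpha> 2 2) \<longlongrightarrow> 1) F"
    using tendsto_add[OF h1 tendsto_const[of 1]] by simp
  have h2: "((\<lambda>\<alpha>. pnorm (tens_diff (lact (0,1,0) (u \<alpha>)) (\<rho> \<alpha> (0,1,0)))) \<longlongrightarrow> 0) F"
    using L[of "(0,1,0)" "(0,0,1)"] by (simp add: u_def)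
  have h3: "((\<lambda>\<alpha>. pnorm (tens_diff (\<rho> \<alpha> (0,1,0)) (tens_scale 0 (\<rho> \<alpha> (1,0,0))))) \<longlongrightarrow> 0) F"
    using R[of "(1,0,0)" "(0,1,0)"] by simp
  have bnd: "norm (u \<alpha> 2 2) \<le> pnorm (tens_diff (lact (0,1,0) (u \<alpha>)) (\<rho> \<alpha> (0,1,0)))
       + pnorm (tens_diff (\<rho> \<alpha> (0,1,0)) (tens_scale 0 (\<rho> \<alpha> (1,0,0))))" for \<alpha>
  proof -
    have e1: "tens_diff (lact (0,1,0) (u \<alpha>)) (\<rho> \<alpha> (0,1,0)) 1 2 = u \<alpha> 2 2 - \<rho> \<alpha> (0,1,0) 1 2"
      by (simp add: tens_diff_def la)
    have e2: "tens_diff (\<rho> \<alpha> (0,1,0)) (tens_scale 0 (\<rho> \<alpha> (1,0,0))) 1 2 = \<rho> \<alpha> (0,1,0) 1 2"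
      by (simp add: tens_diff_def tens_scale_def)
    have "norm (u \<alpha> 2 2) \<le> norm (u \<alpha> 2 2 - \<rho> \<alpha> (0,1,0) 1 2) + norm (\<rho> \<alpha> (0,1,0) 1 2)"
      by (metis diff_add_cancel norm_triangle_ineq)
    then show ?thesis
      using coef_le[of "tens_diff (lact (0,1,0) (u \<alpha>)) (\<rho> \<alpha> (0,1,0))" 1 2]
        coef_le[of "tens_diff (\<rho> \<alpha> (0,1,0)) (tens_scale 0 (\<rho> \<alpha> (1,0,0)))" 1 2]
      unfolding e1 e2 by simp
  qed
  have "((\<lambda>\<alpha>. u \<alpha> 2 2) \<longlongrightarrow> 0) F"
    apply (rule tendsto_norm_zero_cancel)
    apply (rule tendsto_sandwich[of "\<lambda>_. 0" _ _ "\<lambda>\<alpha>. pnorm (tens_diff (lact (0,1,0) (u \<alpha>)) (\<rho> \<alpha> (0,1,0)))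
       + pnorm (tens_diff (\<rho> \<alpha> (0,1,0)) (tens_scale 0 (\<rho> \<alpha> (1,0,0))))"])
    using bnd tendsto_add[OF h2 h3] by auto
  then have "(1::complex) = 0" using tendsto_unique[OF Fnb t1] by blast
  then show False by simp
qed

end
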